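(* Let $d\ge1$, $n\ge0$, and for an $\mathbf{OI}_d$-morphism $\phi=(f,g)\colon[n]\to[m]$ let $w(\phi)$ be the word of length $m$ in the alphabet $\{*,1,\dots,d\}$ whose $i$-th letter is $*$ if $i\in f([n])$ and is $g(i)$ otherwise. Then $\phi$ is determined by $w(\phi)$, and for $\mathbf{OI}_d$-morphisms $\phi\colon[n]\to[m]$, $\phi'\colon[n]\to[m']$, there exists an $\mathbf{OI}_d$-morphism $\psi\colon[m]\to[m']$ with $\psi\circ\phi=\phi'$ if and only if $w(\phi)$ is a (not necessarily contiguous) subsequence of $w(\phi')$. Consequently the set $X_n=\coprod_{m\ge n}\hom_{\mathbf{OI}_d}([n],[m])$, partially ordered by $\phi\le\phi'$ iff $\phi'=\psi\circ\phi$ for some $\mathbf{OI}_d$-morphism $\psi$, is well-ordered in the sense that every infinite sequence $\phi_1,\phi_2,\dots$ in $X_n$ has $i<j$ with $\phi_i\le\phi_j$.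
   Context: $\mathbf{OI}_d$ is the category whose objects are finite totally ordered sets; a morphism $S\to T$ is a pair $(f,g)$ with $f\colon S\to T$ an order-preserving injection and $g\colon T\setminus f(S)\to[d]=\{1,\dots,d\}$ arbitrary; the composite of $(f,g)\colon S\to T$ and $(f',g')\colon T\to U$ is $(f'\circ f,g'')$ where $g''(u)=g'(u)$ for $u\notin f'(T)$ and $g''(f'(t))=g(t)$ for $t\in T\setminus f(S)$. $[n]=\{1,\dots,n\}$ with its usual order. *)

theory Defs
  imports Main "HOL-Library.FuncSet" "HOL-Library.Sublist"
begin

text \<open>Both functions are taken
  extensional (undefined outside their domain), so that equal morphisms are equal pairs.\<close>
definition OI_mor :: "nat \<Rightarrow> nat \<Rightarrow> nat \<Rightarrow> ((nat \<Rightarrow> nat) \<times> (nat \<Rightarrow> nat)) set" where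
  "OI_mor d n m = {(f, g). f \<in> {1..n} \<rightarrow>\<^sub>E {1..m} \<and> strict_mono_on {1..n} f
      \<and> g \<in> ({1..m} - f ` {1..n}) \<rightarrow>\<^sub>E {1..d}}"

definition OI_comp :: "nat \<Rightarrow> nat \<Rightarrow> nat \<Rightarrow> (nat \<Rightarrow> nat) \<times> (nat \<Rightarrow> nat)
    \<Rightarrow> (nat \<Rightarrow> nat) \<times> (nat \<Rightarrow> nat) \<Rightarrow> (nat \<Rightarrow> nat) \<times> (nat \<Rightarrow> nat)" where
  "OI_comp n m m' psi phi =
     (case psi of (f', g') \<Rightarrow> case phi of (f, g) \<Rightarrow>
       (restrict (f' \<circ> f) {1..n},
        restrict (\<lambda>u. if u \<in> f' ` {1..m} then g (the_inv_into {1..m} f' u) else g' u)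
                 ({1..m'} - (f' \<circ> f) ` {1..n})))"

text \<open>The word w(phi) of length m over {*,1..d}; * is represented by None.\<close>
definition OI_word :: "nat \<Rightarrow> nat \<Rightarrow> (nat \<Rightarrow> nat) \<times> (nat \<Rightarrow> nat) \<Rightarrow> nat option list" where
  "OI_word n m phi = (case phi of (f, g) \<Rightarrow>
      map (\<lambda>i. if i \<in> f ` {1..n} then None else Some (g i)) [1..<m+1])"

definition OI_X :: "nat \<Rightarrow> nat \<Rightarrow> (nat \<times> ((nat \<Rightarrow> nat) \<times> (nat \<Rightarrow> nat))) set" where
  "OI_X d n = (SIGMA m:{n..}. OI_mor d n m)"

definition OI_le :: "nat \<Rightarrow> nat \<Rightarrow> nat \<times> ((nat \<Rightarrow> nat) \<times> (nat \<Rightarrow> nat))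
    \<Rightarrow> nat \<times> ((nat \<Rightarrow> nat) \<times> (nat \<Rightarrow> nat)) \<Rightarrow> bool" where
  "OI_le d n x y = (\<exists>psi \<in> OI_mor d (fst x) (fst y). OI_comp n (fst x) (fst y) psi (snd x) = snd y)"

end

theory Submission
  imports Defs "HOL-Library.Infinite_Set"
begin

lemma higman:
  fixes A :: "'a set" and F :: "nat \<Rightarrow> 'a list"
  assumes finA: "finite A" and FA: "\<And>i. set (F i) \<subseteq> A"
  shows "\<exists>i j. i < j \<and> subseq (F i) (F j)"
proof (rule ccontr)
  assume nF: "\<not> ?thesis"
  define B where "B = {f :: nat \<Rightarrow> 'a list. (\<forall>i j. i < j \<longrightarrow> \<not> subseq (f i) (f j)) \<and> (\<forall>i. set (f i) \<subseteq> A)}"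
  define cands where "cands = (\<lambda>p. {f \<in> B. \<forall>i<length p. f i = p ! i})"
  define chs where "chs = (\<lambda>p. SOME w. \<exists>f\<in>cands p. f (length p) = w \<and> (\<forall>f'\<in>cands p. length w \<le> length (f' (length p))))"
  have ch: "\<exists>f\<in>cands p. f (length p) = chs p \<and> (\<forall>f'\<in>cands p. length (chs p) \<le> length (f' (length p)))"
    if f0c: "f0 \<in> cands p" for p f0
  proof -
    obtain f where f: "f \<in> cands p" "\<forall>y. y \<in> cands p \<longrightarrow> length (f (length p)) \<le> length (y (length p))"
      using ex_has_least_nat[of "\<lambda>f. f \<in> cands p" f0 "\<lambda>f. length (f (length p))"] f0c by blast
    then have "\<exists>w. \<exists>f\<in>cands p. f (length p) = w \<and> (\<forall>f'\<in>cands p. length w \<le> length (f' (length p)))"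
      by blast
    from someI_ex[OF this] show ?thesis unfolding chs_def .
  qed
  define pre where "pre = rec_nat [] (\<lambda>k p. p @ [chs p])"
  have pre0: "pre 0 = []" and preS: "\<And>k. pre (Suc k) = pre k @ [chs (pre k)]"
    by (simp_all add: pre_def)
  have inv: "length (pre k) = k \<and> cands (pre k) \<noteq> {}" for k
  proof (induction k)
    case 0
    have "F \<in> B" using nF FA unfolding B_def by blast
    then show ?case by (auto simp: pre0 cands_def)
  next
    case (Suc k)
    then obtain f0 where "f0 \<in> cands (pre k)" by blast
    from ch[OF this] obtain f where f: "f \<in> cands (pre k)" "f (length (pre k)) = chs (pre k)" by blast
    have "f \<in> cands (pre (Suc k))"
      using f Suc.IH unfolding cands_def preS by (auto simp: nth_append less_Suc_eq)
    then show ?case using Suc.IH by (auto simp: preS)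
  qed
  define M where "M = (\<lambda>i. chs (pre i))"
  have preM: "i < k \<Longrightarrow> pre k ! i = M i" for i k
  proof (induction k)
    case 0 then show ?case by simp
  next
    case (Suc k) then show ?case using inv[of k] by (auto simp: preS nth_append M_def less_Suc_eq)
  qed
  have Mprop: "\<exists>f\<in>B. \<forall>i\<le>k. f i = M i" for k
  proof -
    obtain f where "f \<in> cands (pre (Suc k))" using inv[of "Suc k"] by blast
    then have "f \<in> B" "\<forall>i<Suc k. f i = M i" using inv[of "Suc k"] preM[of _ "Suc k"] unfolding cands_def by auto
    then show ?thesis by (metis less_Suc_eq_le)
  qed
  have Mbad: "\<not> subseq (M i) (M j)" if "i < j" for i j
  proof -
    obtain f where fB: "f \<in> B" and fM: "\<forall>i'\<le>j. f i' = M i'" using Mprop by blast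
    have 1: "f i = M i" using fM that by simp
    have 2: "f j = M j" using fM by simp
    have 3: "\<not> subseq (f i) (f j)" using fB that unfolding B_def by blast
    show ?thesis using 1 2 3 by simp
  qed
  have MA: "set (M i) \<subseteq> A" for i
  proof -
    obtain f where fB: "f \<in> B" and fM: "\<forall>i'\<le>i. f i' = M i'" using Mprop by blast
    have "f i = M i" using fM by simp
    moreover have "set (f i) \<subseteq> A" using fB unfolding B_def by blast
    ultimately show ?thesis by simp
  qed
  have Mmin: "length (M k) \<le> length (g k)" if "g \<in> B" "\<forall>i<k. g i = M i" for g k
  proof -
    have gc: "g \<in> cands (pre k)" using that inv[of k] preM[of _ k] unfolding cands_def by auto
    from ch[OF gc] have "length (chs (pre k)) \<le> length (g (length (pre k)))" using gc by blast
    then show ?thesis using inv[of k] unfolding M_def by simp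
  qed
  have Mne: "M i \<noteq> []" for i
    using Mbad[of i "Suc i"] by auto
  have "UNIV = (\<Union>a\<in>A. {i. hd (M i) = a})"
    using Mne MA by (auto intro: hd_in_set[THEN subsetD[OF MA]] )
  then obtain a where aA: "a \<in> A" and infS: "infinite {i. hd (M i) = a}"
    using finA by (metis finite_UN infinite_UNIV_nat)
  define S where "S = {i. hd (M i) = a}"
  define e where "e = enumerate S"
  have sme: "strict_mono e" unfolding e_def using infS S_def strict_mono_enumerate by blast
  have eS: "hd (M (e k)) = a" for k using enumerate_in_set[of S k] infS unfolding S_def e_def by auto
  define k0 where "k0 = e 0"
  define g where "g = (\<lambda>k. if k < k0 then M k else tl (M (e (k - k0))))"
  have Mdec: "M (e k) = a # tl (M (e k))" for k using eS[of k] Mne[of "e k"] by (cases "M (e k)") auto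
  have e0le: "k0 \<le> e k" for k unfolding k0_def using sme by (metis le0 strict_mono_less_eq)
  have "g \<in> B"
    unfolding B_def
  proof (intro CollectI conjI allI impI)
    fix i
    have tl: "set (tl xs) \<subseteq> set xs" for xs :: "'a list" by (cases xs) auto
    show "set (g i) \<subseteq> A" unfolding g_def using MA tl by (simp add: order_trans[OF tl MA])
  next
    fix i j :: nat assume ij: "i < j"
    show "\<not> subseq (g i) (g j)"
    proof (cases "j < k0")
      case True then show ?thesis using Mbad ij unfolding g_def by auto
    next
      case jk: False
      show ?thesis
      proof (cases "i < k0")
        case True
        have "i < e (j - k0)" using True e0le by (meson order_less_le_trans)
        then have "\<not> subseq (M i) (M (e (j - k0)))" by (rule Mbad)
        then have "\<not> subseq (M i) (tl (M (e (j - k0))))"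
          using Mdec[of "j-k0"] by (metis list_emb_Cons)
        then show ?thesis using True jk unfolding g_def by auto
      next
        case False
        have "e (i - k0) < e (j - k0)" using False jk ij sme by (simp add: strict_mono_less)
        then have "\<not> subseq (M (e (i - k0))) (M (e (j - k0)))" by (rule Mbad)
        then have "\<not> subseq (tl (M (e (i - k0)))) (tl (M (e (j - k0))))"
          using Mdec[of "i-k0"] Mdec[of "j-k0"] by (metis subseq_Cons2)
        then show ?thesis using False jk unfolding g_def by auto
      qed
    qed
  qed
  moreover have "\<forall>i<k0. g i = M i" unfolding g_def by auto
  ultimately have "length (M k0) \<le> length (g k0)" by (rule Mmin)
  moreover have "g k0 = tl (M k0)" unfolding g_def k0_def by simp
  ultimately show False using Mne[of k0] by (cases "M k0") auto
qed


lemma subseq_index1: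
  "subseq xs ys \<Longrightarrow> \<exists>h. strict_mono_on {..<length xs} h \<and> (\<forall>i<length xs. h i < length ys \<and> ys ! (h i) = xs ! i)"
proof (induction xs ys rule: list_emb.induct)
  case (list_emb_Nil ys) then show ?case by (auto simp: strict_mono_on_def)
next
  case (list_emb_Cons xs ys y)
  then obtain h where h: "strict_mono_on {..<length xs} h" "\<forall>i<length xs. h i < length ys \<and> ys ! (h i) = xs ! i" by blast
  show ?case
    by (rule exI[of _ "\<lambda>i. Suc (h i)"]) (use h in \<open>auto simp: strict_mono_on_def\<close>)
next
  case (list_emb_Cons2 x y xs ys)
  then obtain h where h: "strict_mono_on {..<length xs} h" "\<forall>i<length xs. h i < length ys \<and> ys ! (h i) = xs ! i" by blast
  define h' where "h' = (\<lambda>i. case i of 0 \<Rightarrow> 0 | Suc j \<Rightarrow> Suc (h j))"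
  have "strict_mono_on {..<length (x # xs)} h'"
    using h(1) unfolding strict_mono_on_def h'_def by (auto split: nat.splits)
  moreover have "\<forall>i<length (x#xs). h' i < length (y # ys) \<and> (y # ys) ! (h' i) = (x # xs) ! i"
    using h(2) list_emb_Cons2.hyps unfolding h'_def by (auto split: nat.splits)
  ultimately show ?case by blast
qed

lemma subseq_index2:
  "strict_mono_on {..<length xs} h \<Longrightarrow> (\<forall>i<length xs. h i < length ys \<and> ys ! (h i) = xs ! i) \<Longrightarrow> subseq xs ys"
proof (induction ys arbitrary: xs h)
  case Nil then show ?case by (cases xs) auto
next
  case (Cons y ys)
  note sm = strict_mono_onD[OF Cons.prems(1)]
  show ?case
  proof (cases xs)
    case Nil then show ?thesis by simp
  next
    case (Cons x xs')
    show ?thesis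
    proof (cases "h 0 = 0")
      case True
      have pos: "0 < h (Suc i)" if "i < length xs'" for i
        using sm[of 0 "Suc i"] that True unfolding Cons by simp
      have "subseq xs' ys"
      proof (rule Cons.IH[of _ "\<lambda>i. h (Suc i) - 1"])
        show "strict_mono_on {..<length xs'} (\<lambda>i. h (Suc i) - 1)"
        proof (rule strict_mono_onI)
          fix r s assume "r \<in> {..<length xs'}" "s \<in> {..<length xs'}" "r < s"
          then show "h (Suc r) - 1 < h (Suc s) - 1"
            using sm[of "Suc r" "Suc s"] pos[of r] unfolding Cons by simp
        qed
        show "\<forall>i<length xs'. h (Suc i) - 1 < length ys \<and> ys ! (h (Suc i) - 1) = xs' ! i"
        proof (intro allI impI)
          fix i assume i: "i < length xs'"
          have "h (Suc i) < length (y # ys)" "(y#ys) ! h (Suc i) = xs ! Suc i" using Cons.prems(2) i Cons by auto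
          then show "h (Suc i) - 1 < length ys \<and> ys ! (h (Suc i) - 1) = xs' ! i"
            using pos[OF i] Cons by (cases "h (Suc i)") auto
        qed
      qed
      moreover have "x = y" using Cons.prems(2) True Cons by auto
      ultimately show ?thesis using Cons by simp
    next
      case False
      have pos: "0 < h i" if "i < length xs" for i
      proof (cases i)
        case 0 then show ?thesis using False by simp
      next
        case (Suc j)
        have "0 \<in> {..<length xs}" using that by (cases xs) auto
        then show ?thesis using sm[of 0 i] that Suc by (cases xs) auto
      qed
      have "subseq xs ys"
      proof (rule Cons.IH[of _ "\<lambda>i. h i - 1"])
        show "strict_mono_on {..<length xs} (\<lambda>i. h i - 1)"
        proof (rule strict_mono_onI)
          fix r s assume "r \<in> {..<length xs}" "s \<in> {..<length xs}" "r < s"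
          then show "h r - 1 < h s - 1"
            using sm[of r s] pos[of r] by simp
        qed
        show "\<forall>i<length xs. h i - 1 < length ys \<and> ys ! (h i - 1) = xs ! i"
        proof (intro allI impI)
          fix i assume i: "i < length xs"
          have "h i < length (y # ys)" "(y#ys) ! h i = xs ! i" using Cons.prems(2) i by auto
          then show "h i - 1 < length ys \<and> ys ! (h i - 1) = xs ! i"
            using pos[OF i] by (cases "h i") auto
        qed
      qed
      then show ?thesis by (rule list_emb_Cons)
    qed
  qed
qed

lemma smono_eq:
  assumes "strict_mono_on {1..n} f" "strict_mono_on {1..n} f'" "f ` {1..(n::nat)} = f' ` {1..n}"
  shows "\<forall>k\<in>{1..n}. f k = (f' k :: nat)"
proof -
  have sw: "sorted_wrt (<) (map h [1..<n+1])" if "strict_mono_on {1..n} h" for h :: "nat \<Rightarrow> nat"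
    using that unfolding sorted_wrt_iff_nth_less strict_mono_on_def by (auto simp del: upt_Suc)
  have st: "set [1..<n+1] = {1..n}" by auto
  have "map f [1..<n+1] = map f' [1..<n+1]"
    apply (rule sorted_distinct_set_unique)
    using sw[OF assms(1)] sw[OF assms(2)] assms(3) st
    by (simp_all add: strict_sorted_iff del: upt_Suc)
  then show ?thesis
    using st unfolding map_eq_conv by blast
qed

lemma word_len[simp]: "length (OI_word n m (f,g)) = m"
  by (simp add: OI_word_def)

lemma word_nth: "k \<in> {1..m} \<Longrightarrow> OI_word n m (f,g) ! (k - 1) = (if k \<in> f`{1..n} then None else Some (g k))"
  by (auto simp: OI_word_def nth_map simp del: upt_Suc)

lemma mor_props:
  assumes "(f,g) \<in> OI_mor d n m"
  shows "f \<in> {1..n} \<rightarrow>\<^sub>E {1..m}" "strict_mono_on {1..n} f" "g \<in> ({1..m} - f`{1..n}) \<rightarrow>\<^sub>E {1..d}"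
  using assms by (auto simp: OI_mor_def)

lemma word_none:
  assumes "k \<in> {1..m}"
  shows "(OI_word n m (f,g) ! (k - 1) = None) = (k \<in> f`{1..n})"
  using word_nth[OF assms] by auto

lemma part1:
  assumes A: "(f,g) \<in> OI_mor d n m" and B: "(f',g') \<in> OI_mor d n m"
    and E: "OI_word n m (f,g) = OI_word n m (f',g')"
  shows "(f,g) = (f',g')"
proof -
  note a = mor_props[OF A] and b = mor_props[OF B]
  have img: "(k \<in> f`{1..n}) = (k \<in> f'`{1..n})" if k: "k \<in> {1..m}" for k
    using word_none[OF k, of n f g] word_none[OF k, of n f' g'] E by simp
  have "f`{1..n} \<subseteq> {1..m}" "f'`{1..n} \<subseteq> {1..m}" using a(1) b(1) by (auto simp: PiE_mem)
  then have ie: "f`{1..n} = f'`{1..n}" using img by blast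
  have "f = f'"
    apply (rule extensionalityI[of _ "{1..n}"])
    using a(1) b(1) smono_eq[OF a(2) b(2) ie] by (auto simp: PiE_def)
  moreover have "g = g'"
  proof (rule extensionalityI[of _ "{1..m} - f`{1..n}"])
    show "g \<in> extensional ({1..m} - f`{1..n})" using a(3) by (auto simp: PiE_def)
    show "g' \<in> extensional ({1..m} - f`{1..n})" using b(3) ie by (auto simp: PiE_def)
    fix k assume k: "k \<in> {1..m} - f`{1..n}"
    then have "OI_word n m (f,g) ! (k - 1) = Some (g k)" "OI_word n m (f',g') ! (k - 1) = Some (g' k)"
      using word_nth[of k m n] ie by auto
    then show "g k = g' k" using E by simp
  qed
  ultimately show ?thesis by simp
qed

lemma comp_eq: "OI_comp n m m' (F,G) (f,g) = (restrict (F \<circ> f) {1..n},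
        restrict (\<lambda>u. if u \<in> F ` {1..m} then g (the_inv_into {1..m} F u) else G u)
                 ({1..m'} - (F \<circ> f) ` {1..n}))"
  by (simp add: OI_comp_def)

lemma part2a:
  assumes A: "(f,g) \<in> OI_mor d n m" and P: "(F,G) \<in> OI_mor d m m'"
  shows "subseq (OI_word n m (f,g)) (OI_word n m' (OI_comp n m m' (F,G) (f,g)))"
proof -
  note a = mor_props[OF A] and p = mor_props[OF P]
  define f' where "f' = restrict (F \<circ> f) {1..n}"
  define g' where "g' = restrict (\<lambda>u. if u \<in> F ` {1..m} then g (the_inv_into {1..m} F u) else G u)
                 ({1..m'} - (F \<circ> f) ` {1..n})"
  have c: "OI_comp n m m' (F,G) (f,g) = (f', g')" unfolding f'_def g'_def comp_eq ..
  have fi: "f' ` {1..n} = F ` (f ` {1..n})" unfolding f'_def by auto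
  have injF: "inj_on F {1..m}" using p(2) by (rule strict_mono_on_imp_inj_on)
  have fsub: "f ` {1..n} \<subseteq> {1..m}" using a(1) by (auto simp: PiE_mem)
  have Fm: "t \<in> {1..m} \<Longrightarrow> F t \<in> {1..m'}" for t using p(1) by (auto simp: PiE_mem)
  show ?thesis
    unfolding c
  proof (rule subseq_index2[of _ "\<lambda>i. F (Suc i) - 1"])
    show "strict_mono_on {..<length (OI_word n m (f, g))} (\<lambda>i. F (Suc i) - 1)"
    proof (rule strict_mono_onI)
      fix r s assume rs: "r \<in> {..<length (OI_word n m (f, g))}" "s \<in> {..<length (OI_word n m (f, g))}" "r < s"
      then have "F (Suc r) < F (Suc s)" using strict_mono_onD[OF p(2), of "Suc r" "Suc s"] by auto
      moreover have "F (Suc r) \<ge> 1" using Fm[of "Suc r"] rs by auto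
      ultimately show "F (Suc r) - 1 < F (Suc s) - 1" by simp
    qed
    show "\<forall>i<length (OI_word n m (f, g)). F (Suc i) - 1 < length (OI_word n m' (f', g')) \<and>
        OI_word n m' (f', g') ! (F (Suc i) - 1) = OI_word n m (f, g) ! i"
    proof (intro allI impI)
      fix i assume "i < length (OI_word n m (f, g))"
      then have t: "Suc i \<in> {1..m}" by simp
      have Ft: "F (Suc i) \<in> {1..m'}" using Fm[OF t] .
      have iff: "(F (Suc i) \<in> f' ` {1..n}) = (Suc i \<in> f ` {1..n})"
        unfolding fi using inj_on_image_mem_iff[OF injF t fsub] .
      have gv: "g' (F (Suc i)) = g (Suc i)" if "Suc i \<notin> f ` {1..n}"
      proof -
        have "F (Suc i) \<notin> (F \<circ> f) ` {1..n}" using iff that fi by (simp add: image_comp)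
        then show ?thesis unfolding g'_def using Ft t the_inv_into_f_f[OF injF t] by auto
      qed
      have "OI_word n m' (f', g') ! (F (Suc i) - 1) = OI_word n m (f, g) ! (Suc i - 1)"
        using word_nth[OF Ft, of n f' g'] word_nth[OF t, of n f g] iff gv by auto
      then show "F (Suc i) - 1 < length (OI_word n m' (f', g')) \<and>
        OI_word n m' (f', g') ! (F (Suc i) - 1) = OI_word n m (f, g) ! i" using Ft by auto
    qed
  qed
qed

lemma part2b:
  assumes A: "(f,g) \<in> OI_mor d n m" and B: "(f',g') \<in> OI_mor d n m'"
    and S: "subseq (OI_word n m (f,g)) (OI_word n m' (f',g'))"
  shows "\<exists>psi \<in> OI_mor d m m'. OI_comp n m m' psi (f,g) = (f',g')"
proof -
  note a = mor_props[OF A] and b = mor_props[OF B]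
  define w where "w = OI_word n m (f,g)"
  define w' where "w' = OI_word n m' (f',g')"
  obtain h where h1: "strict_mono_on {..<m} h" and h2: "\<forall>i<m. h i < m' \<and> w' ! (h i) = w ! i"
    using subseq_index1[OF S] unfolding w_def w'_def by auto
  define F where "F = restrict (\<lambda>k. Suc (h (k - 1))) {1..m}"
  have F1: "F k \<in> {1..m'}" if "k \<in> {1..m}" for k
  proof -
    have "k - 1 < m" using that by auto
    then have "h (k - 1) < m'" using h2 by blast
    then show ?thesis using that unfolding F_def by auto
  qed
  have F2: "strict_mono_on {1..m} F"
  proof (rule strict_mono_onI)
    fix r s assume "r \<in> {1..m}" "s \<in> {1..m}" "r < s"
    then show "F r < F s" using strict_mono_onD[OF h1, of "r - 1" "s - 1"] unfolding F_def by auto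
  qed
  have F3: "w' ! (F k - 1) = w ! (k - 1)" if "k \<in> {1..m}" for k using that h2 unfolding F_def by auto
  have injF: "inj_on F {1..m}" using F2 by (rule strict_mono_on_imp_inj_on)
  have fsub: "f ` {1..n} \<subseteq> {1..m}" using a(1) by (auto simp: PiE_mem)
  have f'sub: "f' ` {1..n} \<subseteq> {1..m'}" using b(1) by (auto simp: PiE_mem)
  have sub: "F ` (f ` {1..n}) \<subseteq> f' ` {1..n}"
  proof
    fix u assume "u \<in> F ` (f ` {1..n})"
    then obtain t where t: "t \<in> f ` {1..n}" "u = F t" by blast
    have tm: "t \<in> {1..m}" using t fsub by auto
    have "w ! (t - 1) = None" using word_none[OF tm, of n f g] t unfolding w_def by simp
    then have "w' ! (u - 1) = None" using F3[OF tm] t by simp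
    then show "u \<in> f' ` {1..n}" using word_none[OF F1[OF tm], of n f' g'] t unfolding w'_def by simp
  qed
  have injf: "inj_on f {1..n}" using a(2) by (rule strict_mono_on_imp_inj_on)
  have injf': "inj_on f' {1..n}" using b(2) by (rule strict_mono_on_imp_inj_on)
  have "card (F ` (f ` {1..n})) = card (f' ` {1..n})"
    using card_image[OF injf] card_image[OF injf'] card_image[OF inj_on_subset[OF injF fsub]] by simp
  then have Sim: "F ` (f ` {1..n}) = f' ` {1..n}" using sub by (intro card_subset_eq) auto
  define G where "G = restrict (\<lambda>u. the (w' ! (u - 1))) ({1..m'} - F ` {1..m})"
  have G1: "w' ! (u - 1) = Some (g' u) \<and> u \<notin> f' ` {1..n}" if "u \<in> {1..m'} - F ` {1..m}" for u
  proof -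
    have "u \<notin> f' ` {1..n}" using that Sim fsub by blast
    then show ?thesis using word_nth[of u m' n f' g'] that unfolding w'_def by auto
  qed
  have p1: "F \<in> {1..m} \<rightarrow>\<^sub>E {1..m'}" using F1 unfolding F_def by (auto simp: restrict_PiE_iff)
  have p3: "G \<in> ({1..m'} - F ` {1..m}) \<rightarrow>\<^sub>E {1..d}"
    unfolding G_def restrict_PiE_iff
  proof
    fix u assume u: "u \<in> {1..m'} - F ` {1..m}"
    then have "w' ! (u - 1) = Some (g' u)" "u \<in> {1..m'} - f' ` {1..n}" using G1[of u] by auto
    then show "the (w' ! (u - 1)) \<in> {1..d}" using b(3) by (auto simp: PiE_mem)
  qed
  have psi: "(F, G) \<in> OI_mor d m m'"
    unfolding OI_mor_def using p1 F2 p3 by blast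
  have fF: "(F \<circ> f) ` {1..n} = f' ` {1..n}" using Sim by (simp add: image_comp)
  have e1: "restrict (F \<circ> f) {1..n} = f'"
  proof (rule extensionalityI[of _ "{1..n}"])
    show "restrict (F \<circ> f) {1..n} \<in> extensional {1..n}" by simp
    show "f' \<in> extensional {1..n}" using b(1) by (auto simp: PiE_def)
    have sm: "strict_mono_on {1..n} (F \<circ> f)"
    proof (rule strict_mono_onI)
      fix r s assume rs: "r \<in> {1..n}" "s \<in> {1..n}" "r < s"
      have "f r \<in> {1..m}" "f s \<in> {1..m}" using rs(1,2) fsub by blast+
      moreover have "f r < f s" using strict_mono_onD[OF a(2) rs] .
      ultimately have "f r < f s" "f r \<in> {1..m}" "f s \<in> {1..m}" by auto
      then show "(F \<circ> f) r < (F \<circ> f) s"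
        using strict_mono_onD[OF F2] by auto
    qed
    fix k assume "k \<in> {1..n}"
    then show "restrict (F \<circ> f) {1..n} k = f' k" using smono_eq[OF sm b(2) fF] by simp
  qed
  define g'' where "g'' = restrict (\<lambda>u. if u \<in> F ` {1..m} then g (the_inv_into {1..m} F u) else G u)
                 ({1..m'} - (F \<circ> f) ` {1..n})"
  have e2: "g'' = g'"
  proof (rule extensionalityI[of _ "{1..m'} - f' ` {1..n}"])
    show "g'' \<in> extensional ({1..m'} - f' ` {1..n})" unfolding g''_def fF by simp
    show "g' \<in> extensional ({1..m'} - f' ` {1..n})" using b(3) by (auto simp: PiE_def)
    fix u assume u: "u \<in> {1..m'} - f' ` {1..n}"
    show "g'' u = g' u"
    proof (cases "u \<in> F ` {1..m}")
      case True
      then obtain t where t: "t \<in> {1..m}" "u = F t" by blast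
      have ti: "the_inv_into {1..m} F u = t" using the_inv_into_f_f[OF injF t(1)] t by simp
      have tn: "t \<notin> f ` {1..n}" using u t Sim by blast
      have "w ! (t - 1) = Some (g t)" using word_nth[OF t(1), of n f g] tn unfolding w_def by simp
      moreover have "w' ! (u - 1) = Some (g' u)" using word_nth[of u m' n f' g'] u unfolding w'_def by auto
      ultimately have "g t = g' u" using F3[OF t(1)] t by simp
      then show ?thesis unfolding g''_def using u True ti fF by auto
    next
      case False
      then have "G u = g' u" using G1[of u] u unfolding G_def by auto
      then show ?thesis unfolding g''_def using u False fF by auto
    qed
  qed
  have "OI_comp n m m' (F,G) (f,g) = (f',g')"
    unfolding comp_eq e1[symmetric] e2[symmetric] g''_def ..
  then show ?thesis using psi by blast
qed


lemma word_set:
  assumes "(f,g) \<in> OI_mor d n m"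
  shows "set (OI_word n m (f,g)) \<subseteq> insert None (Some ` {1..d})"
  using mor_props(3)[OF assms] by (auto simp: OI_word_def PiE_mem)

theorem mainTheorem3:
  fixes d n :: nat
  assumes "d \<ge> 1"
  shows "(\<forall>m. \<forall>phi \<in> OI_mor d n m. \<forall>phi' \<in> OI_mor d n m.
            OI_word n m phi = OI_word n m phi' \<longrightarrow> phi = phi')
       \<and> (\<forall>m m'. \<forall>phi \<in> OI_mor d n m. \<forall>phi' \<in> OI_mor d n m'.
            (\<exists>psi \<in> OI_mor d m m'. OI_comp n m m' psi phi = phi')
            \<longleftrightarrow> subseq (OI_word n m phi) (OI_word n m' phi'))
       \<and> (\<forall>s :: nat \<Rightarrow> nat \<times> ((nat \<Rightarrow> nat) \<times> (nat \<Rightarrow> nat)).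
            (\<forall>i. s i \<in> OI_X d n) \<longrightarrow> (\<exists>i j. i < j \<and> OI_le d n (s i) (s j)))"
proof (intro conjI allI ballI impI)
  fix m phi phi'
  assume "phi \<in> OI_mor d n m" "phi' \<in> OI_mor d n m" "OI_word n m phi = OI_word n m phi'"
  then show "phi = phi'" using part1 by (metis prod.collapse)
next
  fix m m' phi phi'
  assume A: "phi \<in> OI_mor d n m" and B: "phi' \<in> OI_mor d n m'"
  obtain f g where fg: "phi = (f,g)" by fastforce
  obtain f' g' where fg': "phi' = (f',g')" by fastforce
  show "(\<exists>psi \<in> OI_mor d m m'. OI_comp n m m' psi phi = phi')
            \<longleftrightarrow> subseq (OI_word n m phi) (OI_word n m' phi')"
  proof
    assume "\<exists>psi \<in> OI_mor d m m'. OI_comp n m m' psi phi = phi'"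
    then obtain F G where "(F,G) \<in> OI_mor d m m'" "OI_comp n m m' (F,G) phi = phi'" by fastforce
    then show "subseq (OI_word n m phi) (OI_word n m' phi')"
      using part2a[of f g d n m F G m'] A fg by simp
  next
    assume "subseq (OI_word n m phi) (OI_word n m' phi')"
    then show "\<exists>psi \<in> OI_mor d m m'. OI_comp n m m' psi phi = phi'"
      using part2b[of f g d n m f' g' m'] A B fg fg' by simp
  qed
next
  fix s :: "nat \<Rightarrow> nat \<times> ((nat \<Rightarrow> nat) \<times> (nat \<Rightarrow> nat))"
  assume sX: "\<forall>i. s i \<in> OI_X d n"
  have mem: "snd (s i) \<in> OI_mor d n (fst (s i))" for i using sX unfolding OI_X_def by (metis SigmaE2 prod.collapse)
  have "set (OI_word n (fst (s i)) (snd (s i))) \<subseteq> insert None (Some ` {1..d})" for i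
    using word_set[of "fst (snd (s i))" "snd (snd (s i))" d n "fst (s i)"] mem[of i] by simp
  then obtain i j where ij: "i < j" and sub: "subseq (OI_word n (fst (s i)) (snd (s i))) (OI_word n (fst (s j)) (snd (s j)))"
    using higman[of "insert None (Some ` {1..d})" "\<lambda>i. OI_word n (fst (s i)) (snd (s i))"] by blast
  have "\<exists>psi \<in> OI_mor d (fst (s i)) (fst (s j)). OI_comp n (fst (s i)) (fst (s j)) psi (snd (s i)) = snd (s j)"
    using part2b[of "fst (snd (s i))" "snd (snd (s i))" d n "fst (s i)" "fst (snd (s j))" "snd (snd (s j))" "fst (s j)"]
      mem[of i] mem[of j] sub by simp
  then show "\<exists>i j. i < j \<and> OI_le d n (s i) (s j)" using ij unfolding OI_le_def by blast
qed

end
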